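(* Suppose there exists an (integer) $\mathrm{H}_t(m,n;s,k)$. Let $\alpha_1,\alpha_2,\lambda_1,\lambda_2$ be positive integers with $\alpha_1\le\lambda_2$, $\alpha_2\le\lambda_1$, $\alpha_1\lambda_1=\alpha_2\lambda_2$, $\alpha_1 s\le\lambda_2 n$ and $\alpha_2 k\le\lambda_1 m$. Then there exists an (integer) ${}^{\alpha_1\lambda_1}\mathrm{H}_t(\lambda_1 m,\lambda_2 n;\alpha_1 s,\alpha_2 k)$.
   Context: For positive integers $m,n,s,k,\lambda,t$ with $t$ dividing $\frac{2nk}{\lambda}$, let $v=\frac{2nk}{\lambda}+t$ and $J$ the subgroup of $\mathbb{Z}_v$ of order $t$. A ${}^\lambda\mathrm{H}_t(m,n;s,k)$ is an $m\times n$ partially filled array with entries in $\mathbb{Z}_v$ such that: (a) each row has exactly $s$ and each column exactly $k$ filled cells; (b) the multiset $\{\pm x: x$ an entry of a filled cell$\}$ contains each element of $\mathbb{Z}_v\setminus J$ exactly $\lambda$ times and no element of $J$; (c) every row and every column sums to $0$ in $\mathbb{Z}_v$. For $\lambda=1$ it is written $\mathrm{H}_t(m,n;s,k)$. The array is integer if, representing each entry by its integer representative in $\pm\{1,\dots,\lfloor v/2\rfloor\}$, every row and every column sums to $0$ in $\mathbb{Z}$. *)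

theory Defs
  imports Main
begin

text \<open>A partially filled m x n array is a map A :: nat => nat => int option;
  cell (i,j) is filled iff A i j = Some x (we require filled cells to lie in
  rows < m and columns < n).  Entries are integers, read as elements of Z_v
  via reduction mod v.\<close>

definition heff_v :: "nat \<Rightarrow> nat \<Rightarrow> nat \<Rightarrow> nat \<Rightarrow> nat" where
  "heff_v lam t n k = 2 * n * k div lam + t"

definition cellval :: "(nat \<Rightarrow> nat \<Rightarrow> int option) \<Rightarrow> nat \<Rightarrow> nat \<Rightarrow> int" where
  "cellval A i j = (case A i j of None \<Rightarrow> 0 | Some x \<Rightarrow> x)"

text \<open>lambda-H_t(m,n;s,k) over Z_v, v = 2nk/lambda + t; J = subgroup of order t
  = multiples of v/t.\<close>
definition heffter ::
  "nat \<Rightarrow> nat \<Rightarrow> nat \<Rightarrow> nat \<Rightarrow> nat \<Rightarrow> nat \<Rightarrow> (nat \<Rightarrow> nat \<Rightarrow> int option) \<Rightarrow> bool" where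
  "heffter lam t m n s k A \<longleftrightarrow>
     (let v = heff_v lam t n k in
      lam dvd 2 * n * k \<and> t dvd (2 * n * k div lam) \<and>
      (\<forall>i j. A i j \<noteq> None \<longrightarrow> i < m \<and> j < n) \<and>
      (\<forall>i<m. card {j. j < n \<and> A i j \<noteq> None} = s) \<and>
      (\<forall>j<n. card {i. i < m \<and> A i j \<noteq> None} = k) \<and>
      (\<forall>r \<in> {0..<int v}.
          card {(i, j). i < m \<and> j < n \<and> (\<exists>x. A i j = Some x \<and> x mod int v = r)}
        + card {(i, j). i < m \<and> j < n \<and> (\<exists>x. A i j = Some x \<and> (- x) mod int v = r)}
        = (if int (v div t) dvd r then 0 else lam)) \<and>
      (\<forall>i<m. (\<Sum>j<n. cellval A i j) mod int v = 0) \<and>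
      (\<forall>j<n. (\<Sum>i<m. cellval A i j) mod int v = 0))"

definition integer_heffter ::
  "nat \<Rightarrow> nat \<Rightarrow> nat \<Rightarrow> nat \<Rightarrow> nat \<Rightarrow> nat \<Rightarrow> (nat \<Rightarrow> nat \<Rightarrow> int option) \<Rightarrow> bool" where
  "integer_heffter lam t m n s k A \<longleftrightarrow>
     heffter lam t m n s k A \<and>
     (\<forall>i j x. A i j = Some x \<longrightarrow> 1 \<le> \<bar>x\<bar> \<and> \<bar>x\<bar> \<le> int (heff_v lam t n k div 2)) \<and>
     (\<forall>i<m. (\<Sum>j<n. cellval A i j) = 0) \<and>
     (\<forall>j<n. (\<Sum>i<m. cellval A i j) = 0)"

end

theory Submission
  imports Defs
begin



definition FF :: "nat \<Rightarrow> nat \<Rightarrow> nat \<Rightarrow> nat \<Rightarrow> nat \<Rightarrow> bool" where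
  "FF a1 l1 l2 I J \<longleftrightarrow> I < l1 \<and> J < l2 \<and> (\<exists>c<a1. (I*a1+c) mod l2 = J)"

lemma rowF:
  assumes "I < l1" "a1 \<le> l2" "0 < l2"
  shows "card {J. FF a1 l1 l2 I J} = a1"
proof -
  have e: "{J. FF a1 l1 l2 I J} = (\<lambda>c. (I*a1+c) mod l2) ` {..<a1}"
    using assms by (auto simp: FF_def)
  have "inj_on (\<lambda>c. (I*a1+c) mod l2) {..<a1}"
  proof (rule inj_onI)
    fix c c' assume h: "c \<in> {..<a1}" "c' \<in> {..<a1}" "(I*a1+c) mod l2 = (I*a1+c') mod l2"
    show "c = c'"
    proof (rule ccontr)
      assume ne: "c \<noteq> c'"
      { fix x y :: nat assume "x < a1" "y < a1" "x < y" "(I*a1+x) mod l2 = (I*a1+y) mod l2"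
        then have "l2 dvd (I*a1+y) - (I*a1+x)" using mod_eq_dvd_iff_nat[of "I*a1+x" "I*a1+y" l2] by simp
        then have "l2 dvd y - x" by simp
        moreover have "y - x < l2" "0 < y - x" using \<open>y<a1\<close> \<open>x<y\<close> assms by auto
        ultimately have False using nat_dvd_not_less by blast }
      then show False using h ne by (metis lessThan_iff linorder_neqE_nat)
    qed
  qed
  then show ?thesis using e card_image by fastforce
qed

lemma colF:
  assumes "J < l2" "a1 \<le> l2" "0 < a1" "a1 * l1 = a2 * l2"
  shows "card {I. FF a1 l1 l2 I J} = a2"
proof -
  define P where "P = {p. p < l1*a1 \<and> p mod l2 = J}"
  have l2p: "0 < l2" using assms by auto
  have e1: "{I. FF a1 l1 l2 I J} = (\<lambda>p. p div a1) ` P"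
  proof (rule set_eqI, rule iffI)
    fix I assume "I \<in> {I. FF a1 l1 l2 I J}"
    then obtain c where c: "I < l1" "c < a1" "(I*a1+c) mod l2 = J" by (auto simp: FF_def)
    have "I*a1 + c < l1*a1"
    proof -
      have "I*a1 + c < (I+1)*a1" using c by simp
      also have "\<dots> \<le> l1*a1" using c by (intro mult_right_mono) auto
      finally show ?thesis .
    qed
    moreover have "(I*a1+c) div a1 = I" using c by simp
    moreover have "(I*a1+c) \<in> P" using calculation c unfolding P_def by simp
    ultimately show "I \<in> (\<lambda>p. p div a1) ` P" by (metis image_eqI)
  next
    fix I assume "I \<in> (\<lambda>p. p div a1) ` P"
    then obtain p where p: "p < l1*a1" "p mod l2 = J" "I = p div a1" by (auto simp: P_def)
    have "I < l1" using p by (simp add: div_less_iff_less_mult assms)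
    moreover have "p = I*a1 + p mod a1" using p by simp
    moreover have "p mod a1 < a1" using assms by simp
    ultimately have "(I*a1 + p mod a1) mod l2 = J" using p by simp
    then show "I \<in> {I. FF a1 l1 l2 I J}" unfolding FF_def using p assms \<open>I < l1\<close> \<open>p mod a1 < a1\<close>
      by blast
  qed
  have inj1: "inj_on (\<lambda>p. p div a1) P"
  proof (rule inj_onI)
    fix x y assume h: "x \<in> P" "y \<in> P" "x div a1 = y div a1"
    show "x = y"
    proof (rule ccontr)
      { fix x y assume h: "x \<in> P" "y \<in> P" "x div a1 = y div a1" "x < y"
        have "l2 dvd y - x" using h mod_eq_dvd_iff_nat[of x y l2] by (simp add: P_def)
        moreover have "y - x < a1"
        proof -
          have "x = x div a1 * a1 + x mod a1" "y = y div a1 * a1 + y mod a1" by simp_all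
          moreover have "y mod a1 < a1" using assms by simp
          moreover have "x div a1 * a1 = y div a1 * a1" using h by simp
          ultimately show ?thesis using h by linarith
        qed
        ultimately have False using h nat_dvd_not_less[of "y-x" l2] assms by auto }
      then show "x \<noteq> y \<Longrightarrow> False" using h by (metis linorder_neqE_nat)
    qed
  qed
  have e2: "P = (\<lambda>q. J + q*l2) ` {..<a2}"
  proof (rule set_eqI, rule iffI)
    fix p assume "p \<in> P"
    then have p: "p < a2*l2" "p mod l2 = J" using assms by (auto simp: P_def mult.commute)
    have "p = J + (p div l2)*l2" using p div_mult_mod_eq[of p l2] by simp
    moreover have "p div l2 < a2" using p l2p by (simp add: div_less_iff_less_mult)
    ultimately show "p \<in> (\<lambda>q. J + q*l2) ` {..<a2}" by blast
  next
    fix p assume "p \<in> (\<lambda>q. J + q*l2) ` {..<a2}"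
    then obtain q where q: "q < a2" "p = J + q*l2" by auto
    have "J + q*l2 < (q+1)*l2" using assms by simp
    also have "\<dots> \<le> a2*l2" using q by (intro mult_right_mono) auto
    finally have "p < l1*a1" using q assms by (simp add: mult.commute)
    moreover have "p mod l2 = J" using q assms by simp
    ultimately show "p \<in> P" by (simp add: P_def)
  qed
  have inj2: "inj_on (\<lambda>q. J + q*l2) {..<a2}" using l2p by (auto simp: inj_on_def)
  have "card P = a2" using e2 inj2 card_image by fastforce
  then show ?thesis using e1 inj1 card_image by fastforce
qed

lemma totF:
  assumes "a1 \<le> l2" "0 < l2"
  shows "card {(I,J). FF a1 l1 l2 I J} = a1 * l1"
proof -
  have e: "{(I,J). FF a1 l1 l2 I J} = Sigma {..<l1} (\<lambda>I. {J. FF a1 l1 l2 I J})"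
    by (auto simp: FF_def)
  have fin: "finite {J. FF a1 l1 l2 I J}" for I
    by (rule finite_subset[of _ "{..<l2}"]) (auto simp: FF_def)
  have "card (Sigma {..<l1} (\<lambda>I. {J. FF a1 l1 l2 I J})) = (\<Sum>I<l1. card {J. FF a1 l1 l2 I J})"
    using fin by simp
  also have "\<dots> = (\<Sum>I<l1. a1)" using rowF assms by (intro sum.cong) auto
  finally show ?thesis using e by simp
qed



definition blow :: "(nat \<Rightarrow> nat \<Rightarrow> bool) \<Rightarrow> nat \<Rightarrow> nat \<Rightarrow> (nat \<Rightarrow> nat \<Rightarrow> int option) \<Rightarrow> nat \<Rightarrow> nat \<Rightarrow> int option" where
  "blow F m n A i j = (if F (i div m) (j div n) then A (i mod m) (j mod n) else None)"

lemma divmod_inj: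
  assumes "j < (n::nat)" "j' < n" "J*n+j = J'*n+j'"
  shows "J = J' \<and> j = j'"
proof -
  have "(J*n+j) div n = J" "(J'*n+j') div n = J'" "(J*n+j) mod n = j" "(J'*n+j') mod n = j'"
    using assms(1,2) by simp_all
  moreover have "(J*n+j) div n = (J'*n+j') div n" "(J*n+j) mod n = (J'*n+j') mod n"
    using assms(3) by simp_all
  ultimately show ?thesis by simp
qed

lemma sum_if_const:
  assumes "finite S"
  shows "(\<Sum>x\<in>S. if P x then (c::int) else 0) = int (card {x\<in>S. P x}) * c"
proof -
  have "(\<Sum>x\<in>S. if P x then c else 0) = sum (\<lambda>_. c) {x\<in>S. P x}"
    using sum.inter_filter[OF assms, of "\<lambda>_. c" P] by simp
  then show ?thesis by simp
qed

lemma pair_img: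
  assumes "0 < (n::nat)"
  shows "(\<lambda>(J,j). J*n+j) ` ({..<l}\<times>{..<n}) = {..<l*n}"
    and "inj_on (\<lambda>(J,j). J*n+j) ({..<l}\<times>{..<n})"
proof -
  show "(\<lambda>(J,j). J*n+j) ` ({..<l}\<times>{..<n}) = {..<l*n}"
  proof (rule set_eqI, rule iffI)
    fix x assume "x \<in> (\<lambda>(J,j). J*n+j) ` ({..<l}\<times>{..<n})"
    then obtain J j where h: "J < l" "j < n" "x = J*n+j" by auto
    have "J*n + j < (J+1)*n" using h by simp
    also have "\<dots> \<le> l*n" using h by (intro mult_right_mono) auto
    finally show "x \<in> {..<l*n}" using h by simp
  next
    fix x assume "x \<in> {..<l*n}"
    then have "x div n < l" "x mod n < n" "x = x div n * n + x mod n"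
      using assms by (auto simp: div_less_iff_less_mult)
    then show "x \<in> (\<lambda>(J,j). J*n+j) ` ({..<l}\<times>{..<n})"
      by (metis (mono_tags, lifting) SigmaI case_prod_conv image_eqI lessThan_iff)
  qed
  show "inj_on (\<lambda>(J,j). J*n+j) ({..<l}\<times>{..<n})"
    by (auto simp: inj_on_def dest: divmod_inj)
qed

lemma sum_split:
  assumes "0 < (n::nat)"
  shows "(\<Sum>x<l*n. f x) = (\<Sum>J<l. \<Sum>j<n. f (J*n+j))"
proof -
  have "(\<Sum>x<l*n. f x) = sum f ((\<lambda>(J,j). J*n+j) ` ({..<l}\<times>{..<n}))"
    using pair_img(1)[OF assms] by simp
  also have "\<dots> = sum (f \<circ> (\<lambda>(J,j). J*n+j)) ({..<l}\<times>{..<n})"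
    using pair_img(2)[OF assms] by (rule sum.reindex)
  also have "\<dots> = (\<Sum>J<l. \<Sum>j<n. f (J*n+j))"
    by (simp add: sum.cartesian_product split_def o_def)
  finally show ?thesis .
qed

context
  fixes F :: "nat \<Rightarrow> nat \<Rightarrow> bool" and l1 l2 m n :: nat and A :: "nat \<Rightarrow> nat \<Rightarrow> int option"
  assumes hF: "\<And>I J. F I J \<Longrightarrow> I < l1 \<and> J < l2"
    and mp: "0 < m" and np: "0 < n"
begin

lemma finJ: "finite {J. F I J}"
  by (rule finite_subset[of _ "{..<l2}"]) (auto dest: hF)
lemma finI: "finite {I. F I J}"
  by (rule finite_subset[of _ "{..<l1}"]) (auto dest: hF)
lemma finIJ: "finite {(I,J). F I J}"
  by (rule finite_subset[of _ "{..<l1}\<times>{..<l2}"]) (auto dest: hF)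

lemma rowsum:
  assumes "i < l1*m"
  shows "(\<Sum>j<l2*n. cellval (blow F m n A) i j) = int (card {J. F (i div m) J}) * (\<Sum>j<n. cellval A (i mod m) j)"
proof -
  have "(\<Sum>j<l2*n. cellval (blow F m n A) i j) = (\<Sum>J<l2. \<Sum>j<n. cellval (blow F m n A) i (J*n+j))"
    by (rule sum_split[OF np])
  also have "\<dots> = (\<Sum>J<l2. if F (i div m) J then (\<Sum>j<n. cellval A (i mod m) j) else 0)"
    by (intro sum.cong refl) (auto simp: blow_def cellval_def)
  also have "\<dots> = int (card {J\<in>{..<l2}. F (i div m) J}) * (\<Sum>j<n. cellval A (i mod m) j)"
    by (rule sum_if_const) simp
  also have "{J\<in>{..<l2}. F (i div m) J} = {J. F (i div m) J}" by (auto dest: hF)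
  finally show ?thesis .
qed

lemma colsum:
  assumes "j < l2*n"
  shows "(\<Sum>i<l1*m. cellval (blow F m n A) i j) = int (card {I. F I (j div n)}) * (\<Sum>i<m. cellval A i (j mod n))"
proof -
  have "(\<Sum>i<l1*m. cellval (blow F m n A) i j) = (\<Sum>I<l1. \<Sum>i<m. cellval (blow F m n A) (I*m+i) j)"
    by (rule sum_split[OF mp])
  also have "\<dots> = (\<Sum>I<l1. if F I (j div n) then (\<Sum>i<m. cellval A i (j mod n)) else 0)"
    by (intro sum.cong refl) (auto simp: blow_def cellval_def)
  also have "\<dots> = int (card {I\<in>{..<l1}. F I (j div n)}) * (\<Sum>i<m. cellval A i (j mod n))"
    by (rule sum_if_const) simp
  also have "{I\<in>{..<l1}. F I (j div n)} = {I. F I (j div n)}" by (auto dest: hF)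
  finally show ?thesis .
qed

lemma rowcard:
  assumes "i < l1*m"
  shows "card {j. j < l2*n \<and> blow F m n A i j \<noteq> None} = card {J. F (i div m) J} * card {j. j < n \<and> A (i mod m) j \<noteq> None}"
proof -
  let ?g = "\<lambda>(J,j). J*n+j"
  have e: "{j. j < l2*n \<and> blow F m n A i j \<noteq> None} = ?g ` ({J. F (i div m) J} \<times> {j. j < n \<and> A (i mod m) j \<noteq> None})"
  proof (rule set_eqI, rule iffI)
    fix x assume "x \<in> {j. j < l2*n \<and> blow F m n A i j \<noteq> None}"
    then have h: "F (i div m) (x div n)" "A (i mod m) (x mod n) \<noteq> None" by (auto simp: blow_def split: if_splits)
    have "x = ?g (x div n, x mod n)" by simp
    moreover have "(x div n, x mod n) \<in> {J. F (i div m) J} \<times> {j. j < n \<and> A (i mod m) j \<noteq> None}"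
      using h np by simp
    ultimately show "x \<in> ?g ` ({J. F (i div m) J} \<times> {j. j < n \<and> A (i mod m) j \<noteq> None})" by blast
  next
    fix x assume "x \<in> ?g ` ({J. F (i div m) J} \<times> {j. j < n \<and> A (i mod m) j \<noteq> None})"
    then obtain J j where h: "F (i div m) J" "j < n" "A (i mod m) j \<noteq> None" "x = J*n+j" by auto
    have "J < l2" using hF[OF h(1)] by simp
    then have "x \<in> ?g ` ({..<l2}\<times>{..<n})" using h by auto
    then have "x < l2*n" using pair_img(1)[OF np] by auto
    then show "x \<in> {j. j < l2*n \<and> blow F m n A i j \<noteq> None}" using h by (simp add: blow_def)
  qed
  have inj: "inj_on ?g ({J. F (i div m) J} \<times> {j. j < n \<and> A (i mod m) j \<noteq> None})"
    by (rule inj_on_subset[OF pair_img(2)[OF np, of l2]]) (auto dest: hF)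
  then have "card {j. j < l2*n \<and> blow F m n A i j \<noteq> None} = card ({J. F (i div m) J} \<times> {j. j < n \<and> A (i mod m) j \<noteq> None})"
    using card_image[OF inj] e by simp
  then show ?thesis by (simp add: card_cartesian_product)
qed

lemma colcard:
  assumes "j < l2*n"
  shows "card {i. i < l1*m \<and> blow F m n A i j \<noteq> None} = card {I. F I (j div n)} * card {i. i < m \<and> A i (j mod n) \<noteq> None}"
proof -
  let ?g = "\<lambda>(J,j). J*m+j"
  have e: "{i. i < l1*m \<and> blow F m n A i j \<noteq> None} = ?g ` ({I. F I (j div n)} \<times> {i. i < m \<and> A i (j mod n) \<noteq> None})"
  proof (rule set_eqI, rule iffI)
    fix x assume "x \<in> {i. i < l1*m \<and> blow F m n A i j \<noteq> None}"
    then have h: "F (x div m) (j div n)" "A (x mod m) (j mod n) \<noteq> None" by (auto simp: blow_def split: if_splits)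
    have "x = ?g (x div m, x mod m)" by simp
    moreover have "(x div m, x mod m) \<in> {I. F I (j div n)} \<times> {i. i < m \<and> A i (j mod n) \<noteq> None}"
      using h mp by simp
    ultimately show "x \<in> ?g ` ({I. F I (j div n)} \<times> {i. i < m \<and> A i (j mod n) \<noteq> None})" by blast
  next
    fix x assume "x \<in> ?g ` ({I. F I (j div n)} \<times> {i. i < m \<and> A i (j mod n) \<noteq> None})"
    then obtain I i where h: "F I (j div n)" "i < m" "A i (j mod n) \<noteq> None" "x = I*m+i" by auto
    have "I < l1" using hF[OF h(1)] by simp
    then have "x \<in> ?g ` ({..<l1}\<times>{..<m})" using h by auto
    then have "x < l1*m" using pair_img(1)[OF mp] by auto
    then show "x \<in> {i. i < l1*m \<and> blow F m n A i j \<noteq> None}" using h by (simp add: blow_def)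
  qed
  have inj: "inj_on ?g ({I. F I (j div n)} \<times> {i. i < m \<and> A i (j mod n) \<noteq> None})"
    by (rule inj_on_subset[OF pair_img(2)[OF mp, of l1]]) (auto dest: hF)
  then have "card {i. i < l1*m \<and> blow F m n A i j \<noteq> None} = card ({I. F I (j div n)} \<times> {i. i < m \<and> A i (j mod n) \<noteq> None})"
    using card_image[OF inj] e by simp
  then show ?thesis by (simp add: card_cartesian_product)
qed

lemma cellcard:
  "card {(i, j). i < l1*m \<and> j < l2*n \<and> (\<exists>x. blow F m n A i j = Some x \<and> Q x)}
   = card {(I,J). F I J} * card {(i, j). i < m \<and> j < n \<and> (\<exists>x. A i j = Some x \<and> Q x)}"
proof -
  let ?S = "{(i, j). i < m \<and> j < n \<and> (\<exists>x. A i j = Some x \<and> Q x)}"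
  let ?g = "\<lambda>((I,J),(a,b)). (I*m+a, J*n+b)"
  have e: "{(i, j). i < l1*m \<and> j < l2*n \<and> (\<exists>x. blow F m n A i j = Some x \<and> Q x)} = ?g ` ({(I,J). F I J} \<times> ?S)"
  proof (rule set_eqI, rule iffI)
    fix p assume "p \<in> {(i, j). i < l1*m \<and> j < l2*n \<and> (\<exists>x. blow F m n A i j = Some x \<and> Q x)}"
    then obtain i j x where h: "p = (i,j)" "F (i div m) (j div n)" "A (i mod m) (j mod n) = Some x" "Q x"
      by (auto simp: blow_def split: if_splits)
    have "p = ?g ((i div m, j div n), (i mod m, j mod n))" using h by simp
    moreover have "((i div m, j div n), (i mod m, j mod n)) \<in> {(I,J). F I J} \<times> ?S"
      using h mp np by simp
    ultimately show "p \<in> ?g ` ({(I,J). F I J} \<times> ?S)" by blast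
  next
    fix p assume "p \<in> ?g ` ({(I,J). F I J} \<times> ?S)"
    then obtain I J a b x where h: "F I J" "a < m" "b < n" "A a b = Some x" "Q x" "p = (I*m+a, J*n+b)"
      by auto
    have "I < l1" "J < l2" using hF[OF h(1)] by auto
    then have "I*m+a \<in> (\<lambda>(J,j). J*m+j) ` ({..<l1}\<times>{..<m})" "J*n+b \<in> (\<lambda>(J,j). J*n+j) ` ({..<l2}\<times>{..<n})"
      using h by auto
    then have "I*m+a < l1*m" "J*n+b < l2*n" using pair_img(1)[OF mp] pair_img(1)[OF np] by auto
    then show "p \<in> {(i, j). i < l1*m \<and> j < l2*n \<and> (\<exists>x. blow F m n A i j = Some x \<and> Q x)}"
      using h by (simp add: blow_def)
  qed
  have inj: "inj_on ?g ({(I,J). F I J} \<times> ?S)"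
    by (auto simp: inj_on_def dest: divmod_inj)
  then have "card {(i, j). i < l1*m \<and> j < l2*n \<and> (\<exists>x. blow F m n A i j = Some x \<and> Q x)} = card ({(I,J). F I J} \<times> ?S)"
    using card_image[OF inj] e by simp
  then show ?thesis by (simp add: card_cartesian_product)
qed

end


lemma main_heff:
  fixes m n s k t a1 a2 l1 l2 :: nat
  assumes mp: "0 < m" and np: "0 < n" and "0 < a1" "0 < l2" "0 < l1" "0 < a2"
    and le: "a1 \<le> l2" and eq: "a1 * l1 = a2 * l2"
    and H: "heffter 1 t m n s k A"
  shows "heffter (a1 * l1) t (l1 * m) (l2 * n) (a1 * s) (a2 * k) (blow (FF a1 l1 l2) m n A)"
proof -
  let ?F = "FF a1 l1 l2"
  let ?B = "blow ?F m n A"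
  let ?v = "heff_v 1 t n k"
  have hF: "\<And>I J. ?F I J \<Longrightarrow> I < l1 \<and> J < l2" by (simp add: FF_def)
  have e2: "2 * (l2 * n) * (a2 * k) = (a1 * l1) * (2 * n * k)"
    using eq by (metis mult.assoc mult.commute mult.left_commute)
  have vEq: "heff_v (a1 * l1) t (l2 * n) (a2 * k) = heff_v 1 t n k"
    unfolding heff_v_def e2 using assms by simp
  from H have
    h2: "t dvd (2 * n * k div 1)" and
    h4: "\<forall>i<m. card {j. j < n \<and> A i j \<noteq> None} = s" and
    h5: "\<forall>j<n. card {i. i < m \<and> A i j \<noteq> None} = k" and
    h6: "\<forall>r \<in> {0..<int ?v}.
          card {(i, j). i < m \<and> j < n \<and> (\<exists>x. A i j = Some x \<and> x mod int ?v = r)}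
        + card {(i, j). i < m \<and> j < n \<and> (\<exists>x. A i j = Some x \<and> (- x) mod int ?v = r)}
        = (if int (?v div t) dvd r then 0 else 1)" and
    h7: "\<forall>i<m. (\<Sum>j<n. cellval A i j) mod int ?v = 0" and
    h8: "\<forall>j<n. (\<Sum>i<m. cellval A i j) mod int ?v = 0"
    unfolding heffter_def Let_def by auto
  have tot: "card {(I,J). ?F I J} = a1 * l1" using totF le assms by simp
  show ?thesis unfolding heffter_def Let_def vEq
  proof (intro conjI allI impI ballI)
    show "a1 * l1 dvd 2 * (l2 * n) * (a2 * k)" unfolding e2 by simp
    show "t dvd 2 * (l2 * n) * (a2 * k) div (a1 * l1)" unfolding e2 using h2 assms by simp
  next
    fix i j assume "?B i j \<noteq> None"
    then have "?F (i div m) (j div n)" by (auto simp: blow_def split: if_splits)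
    then have "i div m < l1" "j div n < l2" using hF by auto
    then show "i < l1 * m" "j < l2 * n" using mp np by (auto simp: div_less_iff_less_mult)
  next
    fix i assume i: "i < l1 * m"
    then have "i div m < l1" "i mod m < m" using mp by (auto simp: div_less_iff_less_mult)
    then show "card {j. j < l2 * n \<and> ?B i j \<noteq> None} = a1 * s"
      using rowcard[OF hF mp np i] rowF[OF _ le assms(4)] h4 by simp
  next
    fix j assume j: "j < l2 * n"
    then have "j div n < l2" "j mod n < n" using np by (auto simp: div_less_iff_less_mult)
    then show "card {i. i < l1 * m \<and> ?B i j \<noteq> None} = a2 * k"
      using colcard[OF hF mp np j] colF[OF _ le assms(3) eq] h5 by simp
  next
    fix r assume r: "r \<in> {0..<int ?v}"
    show "card {(i, j). i < l1 * m \<and> j < l2 * n \<and> (\<exists>x. ?B i j = Some x \<and> x mod int ?v = r)}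
        + card {(i, j). i < l1 * m \<and> j < l2 * n \<and> (\<exists>x. ?B i j = Some x \<and> (- x) mod int ?v = r)}
        = (if int (?v div t) dvd r then 0 else a1 * l1)"
      using cellcard[OF hF mp np, where A=A and Q="\<lambda>x. x mod int ?v = r"]
            cellcard[OF hF mp np, where A=A and Q="\<lambda>x. (- x) mod int ?v = r"] h6[rule_format, OF r] tot
      by (simp add: add_mult_distrib2[symmetric] split: if_splits)
  next
    fix i assume i: "i < l1 * m"
    then have "i mod m < m" using mp by simp
    then have "int ?v dvd (\<Sum>j<n. cellval A (i mod m) j)" using h7 by auto
    then show "(\<Sum>j<l2 * n. cellval ?B i j) mod int ?v = 0"
      using rowsum[OF hF mp np i] by simp
  next
    fix j assume j: "j < l2 * n"
    then have "j mod n < n" using np by simp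
    then have "int ?v dvd (\<Sum>i<m. cellval A i (j mod n))" using h8 by auto
    then show "(\<Sum>i<l1 * m. cellval ?B i j) mod int ?v = 0"
      using colsum[OF hF mp np j] by simp
  qed
qed


lemma main_int:
  fixes m n s k t a1 a2 l1 l2 :: nat
  assumes mp: "0 < m" and np: "0 < n" and "0 < a1" "0 < l2" "0 < l1" "0 < a2"
    and le: "a1 \<le> l2" and eq: "a1 * l1 = a2 * l2"
    and H: "integer_heffter 1 t m n s k A"
  shows "integer_heffter (a1 * l1) t (l1 * m) (l2 * n) (a1 * s) (a2 * k) (blow (FF a1 l1 l2) m n A)"
proof -
  let ?F = "FF a1 l1 l2"
  let ?B = "blow ?F m n A"
  have hF: "\<And>I J. ?F I J \<Longrightarrow> I < l1 \<and> J < l2" by (simp add: FF_def)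
  have e2: "2 * (l2 * n) * (a2 * k) = (a1 * l1) * (2 * n * k)"
    using eq by (metis mult.assoc mult.commute mult.left_commute)
  have vEq: "heff_v (a1 * l1) t (l2 * n) (a2 * k) = heff_v 1 t n k"
    unfolding heff_v_def e2 using assms by simp
  from H have H1: "heffter 1 t m n s k A"
    and b: "\<forall>i j x. A i j = Some x \<longrightarrow> 1 \<le> \<bar>x\<bar> \<and> \<bar>x\<bar> \<le> int (heff_v 1 t n k div 2)"
    and r0: "\<forall>i<m. (\<Sum>j<n. cellval A i j) = 0"
    and c0: "\<forall>j<n. (\<Sum>i<m. cellval A i j) = 0"
    unfolding integer_heffter_def by auto
  show ?thesis unfolding integer_heffter_def vEq
  proof (intro conjI allI impI)
    show "heffter (a1 * l1) t (l1 * m) (l2 * n) (a1 * s) (a2 * k) ?B"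
      by (rule main_heff[OF assms(1-8) H1])
  next
    fix i j x assume "?B i j = Some x"
    then have "A (i mod m) (j mod n) = Some x" by (simp add: blow_def split: if_splits)
    then show "1 \<le> \<bar>x\<bar>" "\<bar>x\<bar> \<le> int (heff_v 1 t n k div 2)" using b by blast+
  next
    fix i assume i: "i < l1 * m"
    then have "i mod m < m" using mp by simp
    then show "(\<Sum>j<l2 * n. cellval ?B i j) = 0" using rowsum[OF hF mp np i] r0 by simp
  next
    fix j assume j: "j < l2 * n"
    then have "j mod n < n" using np by simp
    then show "(\<Sum>i<l1 * m. cellval ?B i j) = 0" using colsum[OF hF mp np j] c0 by simp
  qed
qed

theorem proposition4:
  fixes m n s k t a1 a2 l1 l2 :: nat
  assumes "0 < m" "0 < n" "0 < s" "0 < k" "0 < t"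
    and "0 < a1" "0 < a2" "0 < l1" "0 < l2"
    and "a1 \<le> l2" "a2 \<le> l1" "a1 * l1 = a2 * l2"
    and "a1 * s \<le> l2 * n" "a2 * k \<le> l1 * m"
  shows "((\<exists>A. heffter 1 t m n s k A) \<longrightarrow>
           (\<exists>B. heffter (a1 * l1) t (l1 * m) (l2 * n) (a1 * s) (a2 * k) B))
       \<and> ((\<exists>A. integer_heffter 1 t m n s k A) \<longrightarrow>
           (\<exists>B. integer_heffter (a1 * l1) t (l1 * m) (l2 * n) (a1 * s) (a2 * k) B))"
  proof (intro conjI impI)
  assume "\<exists>A. heffter 1 t m n s k A"
  then obtain A where "heffter 1 t m n s k A" by blast
  then show "\<exists>B. heffter (a1 * l1) t (l1 * m) (l2 * n) (a1 * s) (a2 * k) B"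
    using main_heff[OF assms(1,2,6,9,8,7,10,12)] by blast
next
  assume "\<exists>A. integer_heffter 1 t m n s k A"
  then obtain A where "integer_heffter 1 t m n s k A" by blast
  then show "\<exists>B. integer_heffter (a1 * l1) t (l1 * m) (l2 * n) (a1 * s) (a2 * k) B"
    using main_int[OF assms(1,2,6,9,8,7,10,12)] by blast
qed

end
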